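(* Let $n\ge1$ and $0\le k<n$. Then: (a) $|\mathbf{I}_{n,k}(001)|=|\mathbf{I}_{n-1}(001)|-\sum_{j<k}|\mathbf{I}_{n-2,j}(001)|$. (b) $|\mathbf{I}_{n,k}(010)|=|\mathbf{I}_{n-1}(010)|-(n-2-k)\,|\mathbf{I}_{n-2,k}(010)|$. (c) For $k<n-1$, $|\mathbf{I}_{n,k}(011)|=|\mathbf{I}_{n-1}(011)|-\sum_{j<k}|\mathbf{I}_{n-2,j}(011)|$, and $|\mathbf{I}_{n,n-1}(011)|=|\mathbf{I}_{n-1}(011)|$. (d) $|\mathbf{I}_{n,k}(101)|=|\mathbf{I}_{n-1}(101)|-k\,|\mathbf{I}_{n-2,k}(101)|$.
   Context: An inversion sequence of length $n$ is an integer sequence $e=e_1\dots e_n$ with $0\le e_i<i$ for all $i$; $\mathbf{I}_n$ denotes the set of these. The reduction of an integer word replaces every occurrence of its $i$-th smallest distinct value by $i-1$. $e$ contains the consecutive pattern $p$ of length 3 if some $e_ie_{i+1}e_{i+2}$ has reduction $p$, and avoids it otherwise; $\mathbf{I}_n(p)$ is the set of $e\in\mathbf{I}_n$ avoiding $p$. $\mathbf{I}_{n,k}(p)=\{e\in\mathbf{I}_n(p):e_n=k\}$, empty for $k\ge n$. Conventions: $|\mathbf{I}_0(p)|=1$ and $|\mathbf{I}_{m,j}(p)|=0$ for $m\le0$; empty sums are $0$. *)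

theory Defs
  imports Main
begin

text \<open>Inversion sequences of length n, as 0-indexed lists: e ! i \<le> i (i.e. 0 \<le> e_{i+1} < i+1).\<close>
definition inv_seqs :: "nat \<Rightarrow> nat list set" where
  "inv_seqs n = {e. length e = n \<and> (\<forall>i<n. e ! i \<le> i)}"

definition reduction :: "nat list \<Rightarrow> nat list" where
  "reduction w = map (\<lambda>x. card {y \<in> set w. y < x}) w"

definition contains_consec :: "nat list \<Rightarrow> nat list \<Rightarrow> bool" where
  "contains_consec e p \<longleftrightarrow>
     (\<exists>i. i + length p \<le> length e \<and> reduction (take (length p) (drop i e)) = p)"

definition avoiders :: "nat \<Rightarrow> nat list \<Rightarrow> nat list set" where
  "avoiders n p = {e \<in> inv_seqs n. \<not> contains_consec e p}"

definition avoiders_last :: "nat \<Rightarrow> nat \<Rightarrow> nat list \<Rightarrow> nat list set" where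
  "avoiders_last n k p = {e \<in> avoiders n p. 0 < n \<and> last e = k}"

end

theory Submission
  imports Defs
begin

lemma red3: "reduction [a,b,c] = [card ({b,c} \<inter> {..<a}), card ({a,c} \<inter> {..<b}), card ({a,b} \<inter> {..<c})]"
  unfolding reduction_def by (auto intro!: arg_cong[where f=card])
lemma r001: "reduction [a,b,c] = [0,0,1] \<longleftrightarrow> a = b \<and> b < (c::nat)"
  unfolding red3 by (cases rule: linorder_cases[of a b]; cases rule: linorder_cases[of b c]; cases rule: linorder_cases[of a c]; auto simp: Int_insert_left)
lemma r010: "reduction [a,b,c] = [0,1,0] \<longleftrightarrow> a = c \<and> a < (b::nat)"
  unfolding red3 by (cases rule: linorder_cases[of a b]; cases rule: linorder_cases[of b c]; cases rule: linorder_cases[of a c]; auto simp: Int_insert_left)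
lemma r011: "reduction [a,b,c] = [0,1,1] \<longleftrightarrow> b = c \<and> a < (b::nat)"
  unfolding red3 by (cases rule: linorder_cases[of a b]; cases rule: linorder_cases[of b c]; cases rule: linorder_cases[of a c]; auto simp: Int_insert_left)
lemma r101: "reduction [a,b,c] = [1,0,1] \<longleftrightarrow> a = c \<and> b < (a::nat)"
  unfolding red3 by (cases rule: linorder_cases[of a b]; cases rule: linorder_cases[of b c]; cases rule: linorder_cases[of a c]; auto simp: Int_insert_left)


lemma drop2: assumes "i + 2 = length e" shows "drop i e = [e!i, e!(Suc i)]"
proof -
  have c: "drop i e = e!i # drop (Suc i) e" by (rule Cons_nth_drop_Suc[symmetric]) (use assms in simp)
  have b: "drop (Suc i) e = e!Suc i # drop (Suc (Suc i)) e" by (rule Cons_nth_drop_Suc[symmetric]) (use assms in simp)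
  have a: "drop (Suc (Suc i)) e = []" using assms by simp
  show ?thesis using a b c by simp
qed

lemma cc_snoc:
  assumes "length p = 3"
  shows "contains_consec (e@[x]) p \<longleftrightarrow> contains_consec e p \<or>
     (2 \<le> length e \<and> reduction [e!(length e-2), e!(length e - 1), x] = p)"
proof
  assume "contains_consec (e@[x]) p"
  then obtain i where i: "i + 3 \<le> length e + 1" "reduction (take 3 (drop i (e@[x]))) = p"
    unfolding contains_consec_def using assms by auto
  show "contains_consec e p \<or> (2 \<le> length e \<and> reduction [e!(length e-2), e!(length e - 1), x] = p)"
  proof (cases "i + 3 \<le> length e")
    case True
    then have "take 3 (drop i (e@[x])) = take 3 (drop i e)" by simp
    then show ?thesis using i True assms unfolding contains_consec_def by (intro disjI1 exI[of _ i]) simp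
  next
    case False
    then have ie: "i + 2 = length e" using i by simp
    have l: "length e - 2 = i" "length e - 1 = Suc i" using ie by auto
    have "take 3 (drop i (e@[x])) = [e!(length e-2), e!(length e - 1), x]"
      using drop2[OF ie] ie unfolding l by (simp add: numeral_eq_Suc)
    then show ?thesis using i ie by auto
  qed
next
  assume "contains_consec e p \<or> (2 \<le> length e \<and> reduction [e!(length e-2), e!(length e - 1), x] = p)"
  then show "contains_consec (e@[x]) p"
  proof
    assume "contains_consec e p"
    then obtain i where i: "i + 3 \<le> length e" "reduction (take 3 (drop i e)) = p"
      unfolding contains_consec_def using assms by auto
    then have "take 3 (drop i (e@[x])) = take 3 (drop i e)" by simp
    then show ?thesis using i assms unfolding contains_consec_def by (intro exI[of _ i]) simp
  next
    assume h: "2 \<le> length e \<and> reduction [e!(length e-2), e!(length e - 1), x] = p"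
    define i where "i = length e - 2"
    have "2 \<le> length e" using h by simp
    then have ie: "i + 2 = length e" unfolding i_def by arith
    have l: "length e - 2 = i" "length e - 1 = Suc i" using ie by auto
    have "take 3 (drop i (e@[x])) = [e!(length e-2), e!(length e - 1), x]"
      using drop2[OF ie] ie unfolding l by (simp add: numeral_eq_Suc)
    then show ?thesis using h ie assms unfolding contains_consec_def by (intro exI[of _ i]) simp
  qed
qed

lemma inv_snoc: "e@[x] \<in> inv_seqs (Suc m) \<longleftrightarrow> e \<in> inv_seqs m \<and> x \<le> m"
  unfolding inv_seqs_def
  by (auto simp: nth_append less_Suc_eq)

lemma avoid_snoc:
  assumes "length p = 3"
  shows "e@[x] \<in> avoiders (Suc m) p \<longleftrightarrow> e \<in> avoiders m p \<and> x \<le> m \<and>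
     \<not>(2 \<le> m \<and> reduction [e!(m-2), e!(m-1), x] = p)"
  unfolding avoiders_def using cc_snoc[OF assms, of e x] inv_snoc[of e x m]
  by (auto simp: inv_seqs_def)

lemma fin_inv: "finite (inv_seqs m)"
proof -
  have "inv_seqs m \<subseteq> {xs. set xs \<subseteq> {..m} \<and> length xs = m}"
    unfolding inv_seqs_def apply (auto simp: in_set_conv_nth) by (meson less_imp_le order.trans)
  then show ?thesis using finite_lists_length_eq[of "{..m}" m] finite_subset by auto
qed

lemma fin_av: "finite (avoiders m p)" "finite (avoiders_last m k p)"
  using fin_inv by (auto simp: avoiders_def avoiders_last_def intro: finite_subset)

lemma av_len: "e \<in> avoiders m p \<Longrightarrow> length e = m \<and> (\<forall>i<m. e!i \<le> i)"
  by (auto simp: avoiders_def inv_seqs_def)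

definition Bad :: "nat \<Rightarrow> nat \<Rightarrow> nat list \<Rightarrow> nat list set" where
  "Bad N k p = {e \<in> avoiders N p. 2 \<le> N \<and> reduction [e!(N-2), e!(N-1), k] = p}"

lemma last_decomp:
  assumes "length p = 3" "k \<le> N"
  shows "avoiders_last (Suc N) k p = (\<lambda>e. e@[k]) ` (avoiders N p - Bad N k p)"
proof safe
  fix e assume e: "e \<in> avoiders_last (Suc N) k p"
  then have "e \<noteq> []" using av_len by (fastforce simp: avoiders_last_def)
  then obtain e' x where ex: "e = e'@[x]" by (metis rev_exhaust)
  then have "x = k" using e by (auto simp: avoiders_last_def)
  then show "e \<in> (\<lambda>e. e@[k]) ` (avoiders N p - Bad N k p)"
    using e ex avoid_snoc[OF assms(1), of e' x N] by (auto simp: avoiders_last_def Bad_def)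
next
  fix e assume "e \<in> avoiders N p" "e \<notin> Bad N k p"
  then show "e@[k] \<in> avoiders_last (Suc N) k p"
    using avoid_snoc[OF assms(1), of e k N] assms by (auto simp: avoiders_last_def Bad_def)
qed

lemma main_int:
  assumes "length p = 3" "k \<le> N"
  shows "int (card (avoiders_last (Suc N) k p)) = int (card (avoiders N p)) - int (card (Bad N k p))"
proof -
  have "card (avoiders_last (Suc N) k p) = card (avoiders N p - Bad N k p)"
    unfolding last_decomp[OF assms] by (rule card_image) (auto simp: inj_on_def)
  also have "\<dots> = card (avoiders N p) - card (Bad N k p)"
    by (rule card_Diff_subset) (auto simp: Bad_def intro: finite_subset fin_av)
  moreover have "Bad N k p \<subseteq> avoiders N p" by (auto simp: Bad_def)
  ultimately show ?thesis
    using card_mono[OF fin_av(1)] by (simp add: of_nat_diff)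
qed

lemma Bad0: "Bad 0 k p = {}" "Bad (Suc 0) k p = {}" by (auto simp: Bad_def)
lemma AL0: "avoiders_last 0 k p = {}" by (auto simp: avoiders_last_def)

definition PB where "PB M k p = {(e',x). e' \<in> avoiders M p \<and> x \<le> M \<and>
    \<not>(2\<le>M \<and> reduction[e'!(M-2), e'!(M-1), x] = p) \<and> 1 \<le> M \<and> reduction [e'!(M-1), x, k] = p}"

lemma Bad_char:
  assumes "length p = 3"
  shows "card (Bad (Suc M) k p) = card (PB M k p)"
proof -
  have "Bad (Suc M) k p = (\<lambda>(e',x). e'@[x]) ` PB M k p"
  proof safe
    fix e assume e: "e \<in> Bad (Suc M) k p"
    then have "e \<noteq> []" using av_len by (fastforce simp: Bad_def)
    then obtain e' x where ex: "e = e'@[x]" by (metis rev_exhaust)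
    have le: "length e' = M" using e ex av_len by (fastforce simp: Bad_def)
    have "(e',x) \<in> PB M k p"
      using e ex avoid_snoc[OF assms(1), of e' x M] le
      by (auto simp: Bad_def PB_def nth_append)
    then show "e \<in> (\<lambda>(e',x). e'@[x]) ` PB M k p" using ex by force
  next
    fix e' x assume h: "(e',x) \<in> PB M k p"
    then have le: "length e' = M" using av_len by (auto simp: PB_def)
    show "e'@[x] \<in> Bad (Suc M) k p"
      using h avoid_snoc[OF assms(1), of e' x M] le
      by (auto simp: Bad_def PB_def nth_append)
  qed
  moreover have "inj_on (\<lambda>(e',x). e'@[x]) (PB M k p)" by (auto simp: inj_on_def)
  ultimately show ?thesis by (simp add: card_image)
qed

lemma card_pairs:
  assumes "finite J" "\<And>x. x \<in> J \<Longrightarrow> finite (A x)"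
  shows "card {(e,x). x \<in> J \<and> e \<in> A x} = (\<Sum>x\<in>J. card (A x))"
proof -
  have "{(e,x). x \<in> J \<and> e \<in> A x} = (\<lambda>(x,e). (e,x)) ` Sigma J A" by auto
  moreover have "inj_on (\<lambda>(x,e). (e,x)) (Sigma J A)" by (auto simp: inj_on_def)
  ultimately show ?thesis using card_SigmaI[OF assms(1)] assms(2) card_image by metis
qed

lemma AL_big: assumes "M \<le> k" shows "avoiders_last M k p = {}"
proof (rule ccontr)
  assume "avoiders_last M k p \<noteq> {}"
  then obtain e where e: "e \<in> avoiders M p" "0 < M" "last e = k" by (auto simp: avoiders_last_def)
  then have l: "length e = M" "e!(M-1) \<le> M-1" using av_len by auto
  moreover have "e \<noteq> []" using l e(2) by auto
  ultimately have "last e = e!(M-1)" by (simp add: last_conv_nth)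
  then show False using l e assms by simp
qed



lemma av_last: "e \<in> avoiders M p \<Longrightarrow> 0 < M \<Longrightarrow> last e = e!(M-1) \<and> e!(M-1) < M \<and> length e = M"
proof -
  assume e: "e \<in> avoiders M p" "0 < M"
  then have l: "length e = M" "e!(M-1) \<le> M-1" using av_len by auto
  moreover have "e \<noteq> []" using l e(2) by auto
  ultimately show ?thesis using e(2) by (simp add: last_conv_nth)
qed

lemma PB_a: "PB M k [0,0,1] = {(e,x). x \<in> {..<k} \<and> e \<in> avoiders_last M x [0,0,1]}"
  unfolding PB_def avoiders_last_def r001 by (auto dest: av_last)

lemma PB_b: "PB M k [0,1,0] = {(e,x). x \<in> {k<..M} \<and> e \<in> avoiders_last M k [0,1,0]}"
  unfolding PB_def avoiders_last_def r010 by (auto dest: av_last)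

lemma PB_c: "k \<le> M \<Longrightarrow> PB M k [0,1,1] = {(e,x). x \<in> {k} \<and> e \<in> (\<Union>j<k. avoiders_last M j [0,1,1])}"
  unfolding PB_def avoiders_last_def r011 by (auto dest: av_last)

lemma PB_c2: "PB M (Suc M) [0,1,1] = {}"
  unfolding PB_def r011 by auto

lemma PB_d: "PB M k [1,0,1] = {(e,x). x \<in> {..<k} \<and> e \<in> avoiders_last M k [1,0,1]}"
  unfolding PB_def avoiders_last_def r101 by (auto dest: av_last)



lemma card_bad_a: "card (Bad N k [0,0,1]) = (\<Sum>j<k. card (avoiders_last (N-1) j [0,0,1]))"
proof (cases N)
  case 0 then show ?thesis by (simp add: Bad0 AL0)
next
  case (Suc M)
  then show ?thesis using Bad_char[of "[0,0,1]" M k] PB_a[of M k]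
    card_pairs[of "{..<k}" "\<lambda>x. avoiders_last M x [0,0,1]"] fin_av(2) by simp
qed

lemma card_bad_b: "card (Bad N k [0,1,0]) = (N-1-k) * card (avoiders_last (N-1) k [0,1,0])"
proof (cases N)
  case 0 then show ?thesis by (simp add: Bad0 AL0)
next
  case (Suc M)
  then show ?thesis using Bad_char[of "[0,1,0]" M k] PB_b[of M k]
    card_pairs[of "{k<..M}" "\<lambda>x. avoiders_last M k [0,1,0]"] fin_av(2) by simp
qed

lemma card_bad_c: "k \<le> N - 1 \<Longrightarrow> card (Bad N k [0,1,1]) = (\<Sum>j<k. card (avoiders_last (N-1) j [0,1,1]))"
proof (cases N)
  case 0 then show ?thesis by (simp add: Bad0 AL0)
next
  case (Suc M)
  assume k: "k \<le> N - 1"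
  have "card (\<Union>j<k. avoiders_last M j [0,1,1]) = (\<Sum>j<k. card (avoiders_last M j [0,1,1]))"
    by (rule card_UN_disjoint) (auto simp: fin_av avoiders_last_def)
  moreover have "finite (\<Union>j<k. avoiders_last M j [0,1,1])" using fin_av(2) by auto
  ultimately show ?thesis using Suc k Bad_char[of "[0,1,1]" M k] PB_c[of k M]
    card_pairs[of "{k}" "\<lambda>x. \<Union>j<k. avoiders_last M j [0,1,1]"] by simp
qed

lemma card_bad_c2: "card (Bad N N [0,1,1]) = 0"
proof (cases N)
  case 0 then show ?thesis by (simp add: Bad0)
next
  case (Suc M)
  then show ?thesis using Bad_char[of "[0,1,1]" M N] PB_c2[of M] by simp
qed

lemma card_bad_d: "card (Bad N k [1,0,1]) = k * card (avoiders_last (N-1) k [1,0,1])"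
proof (cases N)
  case 0 then show ?thesis by (simp add: Bad0 AL0)
next
  case (Suc M)
  then show ?thesis using Bad_char[of "[1,0,1]" M k] PB_d[of M k]
    card_pairs[of "{..<k}" "\<lambda>x. avoiders_last M k [1,0,1]"] fin_av(2) by simp
qed

theorem mainTheorem16:
  fixes n k :: nat
  assumes "1 \<le> n" and "k < n"
  shows
    "(int (card (avoiders_last n k [0,0,1])) =
       int (card (avoiders (n - 1) [0,0,1])) - (\<Sum>j<k. int (card (avoiders_last (n - 2) j [0,0,1]))))
  \<and>
    (int (card (avoiders_last n k [0,1,0])) =
       int (card (avoiders (n - 1) [0,1,0])) - (int n - 2 - int k) * int (card (avoiders_last (n - 2) k [0,1,0])))
  \<and>
    (k < n - 1 \<longrightarrow> int (card (avoiders_last n k [0,1,1])) =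
       int (card (avoiders (n - 1) [0,1,1])) - (\<Sum>j<k. int (card (avoiders_last (n - 2) j [0,1,1]))))
  \<and>
    (card (avoiders_last n (n - 1) [0,1,1]) = card (avoiders (n - 1) [0,1,1]))
  \<and>
    (int (card (avoiders_last n k [1,0,1])) =
       int (card (avoiders (n - 1) [1,0,1])) - int k * int (card (avoiders_last (n - 2) k [1,0,1])))"
proof -
  obtain N where n: "n = Suc N" using assms(1) by (cases n) auto
  have kN: "k \<le> N" using assms n by simp
  have n1: "n - 1 = N" "n - 2 = N - 1" using n by auto
  have A: "int (card (avoiders_last n k [0,0,1])) =
       int (card (avoiders (n - 1) [0,0,1])) - (\<Sum>j<k. int (card (avoiders_last (n - 2) j [0,0,1])))"
    unfolding n1 using main_int[of "[0,0,1]" k N] kN card_bad_a[of N k] n by simp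
  have B: "int (card (avoiders_last n k [0,1,0])) =
       int (card (avoiders (n - 1) [0,1,0])) - (int n - 2 - int k) * int (card (avoiders_last (n - 2) k [0,1,0]))"
  proof (cases "k < N - 1")
    case True
    then show ?thesis unfolding n1 using main_int[of "[0,1,0]" k N] kN card_bad_b[of N k] n
      by (simp add: of_nat_diff)
  next
    case False
    then have "avoiders_last (N-1) k [0,1,0] = {}" by (intro AL_big) simp
    then show ?thesis unfolding n1 using main_int[of "[0,1,0]" k N] kN card_bad_b[of N k] n by simp
  qed
  have C: "k < n - 1 \<longrightarrow> int (card (avoiders_last n k [0,1,1])) =
       int (card (avoiders (n - 1) [0,1,1])) - (\<Sum>j<k. int (card (avoiders_last (n - 2) j [0,1,1])))"
    unfolding n1 using main_int[of "[0,1,1]" k N] kN card_bad_c[of k N] n by simp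
  have C2: "card (avoiders_last n (n - 1) [0,1,1]) = card (avoiders (n - 1) [0,1,1])"
    using main_int[of "[0,1,1]" N N] card_bad_c2[of N] n by simp
  have D: "int (card (avoiders_last n k [1,0,1])) =
       int (card (avoiders (n - 1) [1,0,1])) - int k * int (card (avoiders_last (n - 2) k [1,0,1]))"
    unfolding n1 using main_int[of "[1,0,1]" k N] kN card_bad_d[of N k] n by simp
  show ?thesis using A B C C2 D by blast
qed


end
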